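(* Let $n\ge3$, $1<k<n/2$, $p>\frac{(n+2)k}{n-2k}$, and let $u$ be a regular solution of (1.6). If the limit $B:=\lim_{r\to\infty}u(r)r^{\frac{2k}{p-k}}$ exists and $B>0$, then $$B=A:=\Big(\tfrac1kC_{n-1}^{k-1}\Big)^{\frac{1}{p-k}}\Big(\tfrac{2k}{p-k}\Big)^{\frac{k}{p-k}}\Big(n-\tfrac{2pk}{p-k}\Big)^{\frac{1}{p-k}}.$$
   Context: Problem (1.6) is: given $\rho>0$, find $u$ with $-\tfrac{1}{k}C_{n-1}^{k-1}(r^{n-k}|u'|^{k-1}u')'=r^{n-1}u^{p}$, $u(r)>0$ for all $r>0$, $u'(0)=0$, $u(0)=\rho$, where $C_{n-1}^{k-1}$ is the binomial coefficient. A solution $u$ of (1.6) is regular if $x\mapsto u(|x|)$ belongs to $C^2(\mathbb{R}^n)$. *)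

theory Defs
  imports "HOL-Analysis.Analysis"
begin

definition C2_on_UNIV :: "('a::real_normed_vector \<Rightarrow> real) \<Rightarrow> bool" where
  "C2_on_UNIV f \<longleftrightarrow>
     (\<exists>f' :: 'a \<Rightarrow> ('a \<Rightarrow>\<^sub>L real). \<exists>f'' :: 'a \<Rightarrow> ('a \<Rightarrow>\<^sub>L ('a \<Rightarrow>\<^sub>L real)).
        (\<forall>x. (f has_derivative blinfun_apply (f' x)) (at x)) \<and>
        (\<forall>x. (f' has_derivative blinfun_apply (f'' x)) (at x)) \<and>
        continuous_on UNIV f'')"

definition solves_1_6 :: "nat \<Rightarrow> nat \<Rightarrow> real \<Rightarrow> real \<Rightarrow> (real \<Rightarrow> real) \<Rightarrow> bool" where
  "solves_1_6 n k p \<rho> u \<longleftrightarrow>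
     \<rho> > 0 \<and> u 0 = \<rho> \<and>
     (u has_real_derivative 0) (at 0 within {0..}) \<and>
     (\<forall>r>0. u r > 0) \<and>
     (\<forall>r>0. u differentiable (at r)) \<and>
     (\<forall>r>0. ((\<lambda>s. - (1 / real k) * real ((n - 1) choose (k - 1)) *
                  (s ^ (n - k) * \<bar>deriv u s\<bar> ^ (k - 1) * deriv u s))
               has_real_derivative (r ^ (n - 1) * u r powr p)) (at r))"

definition regular_radial :: "'n::finite itself \<Rightarrow> (real \<Rightarrow> real) \<Rightarrow> bool" where
  "regular_radial _ u \<longleftrightarrow> C2_on_UNIV (\<lambda>x :: real ^ 'n. u (norm x))"

end

theory Submission
  imports Defs "HOL-Real_Asymp.Real_Asymp"
begin

lemma aux: fixes x y R r m :: real
  assumes "R>0" "r>0" "y>0" "m>0"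
  shows "- x * (R * r) / (m * (y * R)^2) = - (x * inverse (y ^ Suc (Suc 0))) / (m * (R / r))"
  using assms by (simp add: field_simps power2_eq_square)

theorem mainTheorem9:
  fixes n k :: nat and p \<rho> B :: real and u :: "real \<Rightarrow> real"
  assumes hn: "n = CARD('n::finite)" and "n \<ge> 3"
    and "1 < k" and "real k < real n / 2"
    and "p > (real n + 2) * real k / (real n - 2 * real k)"
    and "solves_1_6 n k p \<rho> u"
    and "regular_radial TYPE('n) u"
    and "((\<lambda>r. u r * r powr (2 * real k / (p - real k))) \<longlongrightarrow> B) at_top"
    and "B > 0"
  shows "B = ((1 / real k) * real ((n - 1) choose (k - 1))) powr (1 / (p - real k))
           * (2 * real k / (p - real k)) powr (real k / (p - real k))
           * (real n - 2 * p * real k / (p - real k)) powr (1 / (p - real k))"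
proof -
  define c where "c = (1 / real k) * real ((n - 1) choose (k - 1))"
  define m where "m = 2 * real k / (p - real k)"
  define a where "a = real n - 2 * p * real k / (p - real k)"
  define u' where "u' = deriv u"
  define F where "F = (\<lambda>s. - (1 / real k) * real ((n - 1) choose (k - 1)) *
                  (s ^ (n - k) * \<bar>deriv u s\<bar> ^ (k - 1) * deriv u s))"
  have k1: "real k > 1" using assms(3) by simp
  have nk: "real n - 2 * real k > 0" using assms(4) by simp
  have pk: "p > real k"
  proof -
    have "(real n + 2) * real k / (real n - 2 * real k) \<ge> real k"
      using nk k1 by (simp add: field_simps)
    then show ?thesis using assms(5) by linarith
  qed
  have pnk: "p * (real n - 2 * real k) > real n * real k"
  proof -
    have "p * (real n - 2 * real k) > (real n + 2) * real k"
      using assms(5) nk by (simp add: field_simps)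
    moreover have "(real n + 2) * real k = real n * real k + 2 * real k" by (simp add: algebra_simps)
    ultimately show ?thesis using k1 by linarith
  qed
  have cpos: "c > 0" unfolding c_def using assms(3,4) by auto
  have mpos: "m > 0" unfolding m_def using pk k1 by auto
  have apos: "a > 0"
  proof -
    have "2 * p * real k / (p - real k) < real n"
      using pk pnk by (simp add: field_simps)
    then show ?thesis unfolding a_def by simp
  qed
  have sol: "\<forall>r>0. u r > 0" "\<forall>r>0. u differentiable (at r)"
     "\<forall>r>0. (F has_real_derivative (r ^ (n - 1) * u r powr p)) (at r)"
    using assms(6) unfolding solves_1_6_def F_def by auto
  have Du: "(u has_real_derivative u' r) (at r)" if "r > 0" for r
    using sol(2) that unfolding u'_def by (simp add: DERIV_deriv_iff_real_differentiable)
  have lim0: "((\<lambda>r. u r * r powr m) \<longlongrightarrow> B) at_top" using assms(8) unfolding m_def .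
  have na: "real n - a = m * p" unfolding a_def m_def by (simp add: field_simps)
  define L1 where "L1 = B powr p / a"
  have L1pos: "L1 > 0" unfolding L1_def using assms(9) apos by simp
  have step1: "((\<lambda>r. F r / r powr a) \<longlongrightarrow> L1) at_top"
  proof (rule lhospital_at_top_at_top[where g' = "\<lambda>r. a * r powr (a - 1)"
        and f' = "\<lambda>r. r ^ (n - 1) * u r powr p"])
    show "LIM x at_top. x powr a :> at_top" using real_powr_at_top apos by blast
    show "\<forall>\<^sub>F x in at_top. a * x powr (a - 1) \<noteq> 0"
      using eventually_gt_at_top[of 0] by eventually_elim (use apos in auto)
    show "\<forall>\<^sub>F x in at_top. (F has_real_derivative x ^ (n - 1) * u x powr p) (at x)"
      using eventually_gt_at_top[of 0] by eventually_elim (use sol(3) in auto)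
    show "\<forall>\<^sub>F x in at_top. ((\<lambda>x. x powr a) has_real_derivative a * x powr (a - 1)) (at x)"
      using eventually_gt_at_top[of 0] by eventually_elim (rule has_real_derivative_powr)
    have "((\<lambda>r. (u r * r powr m) powr p / a) \<longlongrightarrow> L1) at_top"
      unfolding L1_def using assms(9) apos
      by (intro tendsto_divide tendsto_powr lim0 tendsto_const) auto
    moreover have "\<forall>\<^sub>F r in at_top. (u r * r powr m) powr p / a
         = r ^ (n - 1) * u r powr p / (a * r powr (a - 1))"
      using eventually_gt_at_top[of 0]
    proof eventually_elim
      case (elim r)
      have ur: "u r > 0" using sol(1) elim by auto
      have nn: "real n - 1 = real (n - 1)" using assms(2) by (simp add: of_nat_diff)
      have "r ^ (n - 1) = r powr (real n - 1)"
        unfolding nn using elim by (simp add: powr_realpow)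
      moreover have "r powr (real n - 1) = r powr (m * p) * r powr (a - 1)"
        using na by (simp add: powr_add[symmetric] algebra_simps)
      moreover have "(u r * r powr m) powr p = u r powr p * r powr (m * p)"
        using ur elim by (simp add: powr_mult powr_powr)
      ultimately show ?case using apos elim by (simp add: field_simps)
    qed
    ultimately show "((\<lambda>r. r ^ (n - 1) * u r powr p / (a * r powr (a - 1))) \<longlongrightarrow> L1) at_top"
      by (rule Lim_transform_eventually)
  qed
  define D where "D = (L1 / c) powr (1 / real k)"
  define v where "v = (\<lambda>r. - u' r * r powr (m + 1))"
  have ev2: "\<forall>\<^sub>F r in at_top. r > 0 \<and> F r / r powr a > 0"
    using eventually_gt_at_top[of 0] order_tendstoD(1)[OF step1 L1pos]
    by eventually_elim auto
  have step2: "(v \<longlongrightarrow> D) at_top"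
  proof -
    have "((\<lambda>r. (F r / r powr a / c) powr (1 / real k)) \<longlongrightarrow> D) at_top"
      unfolding D_def using L1pos cpos
      by (intro tendsto_powr tendsto_divide step1 tendsto_const) auto
    moreover have "\<forall>\<^sub>F r in at_top. (F r / r powr a / c) powr (1 / real k) = v r"
      using ev2
    proof eventually_elim
      case (elim r)
      then have r0: "r > 0" and Fp: "F r > 0" by (auto simp: zero_less_divide_iff)
      have Fr: "F r = - c * (r ^ (n - k) * \<bar>u' r\<bar> ^ (k - 1) * u' r)"
        unfolding F_def c_def u'_def by simp
      have neg: "u' r < 0"
      proof (rule ccontr)
        assume "\<not> u' r < 0"
        then have "r ^ (n - k) * \<bar>u' r\<bar> ^ (k - 1) * u' r \<ge> 0" using r0 by simp
        then have "c * (r ^ (n - k) * \<bar>u' r\<bar> ^ (k - 1) * u' r) \<ge> 0" using cpos by simp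
        then show False using Fp Fr by linarith
      qed
      have "\<bar>u' r\<bar> ^ (k - 1) * u' r = - ((- u' r) ^ k)"
      proof -
        obtain j where kj: "k = Suc j" using assms(3) by (cases k) auto
        show ?thesis unfolding kj using neg by (simp add: abs_of_neg)
      qed
      note eq = this
      have "F r = - c * (r ^ (n - k) * (\<bar>u' r\<bar> ^ (k - 1) * u' r))" using Fr by (simp only: mult.assoc)
      then have Fr2: "F r = c * r ^ (n - k) * (- u' r) ^ k" unfolding eq by simp
      have e: "real (n - k) - a = (m + 1) * real k"
        using assms(4) unfolding a_def m_def using pk
        by (simp add: of_nat_diff field_simps)
      have "F r / r powr a / c = r powr (real (n - k)) / r powr a * (- u' r) ^ k"
        using cpos r0 Fr2 by (simp add: powr_realpow)
      also have "\<dots> = r powr ((m + 1) * real k) * (- u' r) ^ k"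
        using e[symmetric] by (simp add: powr_diff)
      also have "\<dots> = (v r) ^ k"
      proof -
        have "r powr ((m + 1) * real k) = (r powr (m + 1)) powr real k" by (simp add: powr_powr)
        also have "\<dots> = (r powr (m + 1)) ^ k" using r0 by (simp add: powr_realpow)
        finally have "r powr ((m + 1) * real k) = (r powr (m + 1)) ^ k" .
        moreover have "v r ^ k = (- u' r) ^ k * (r powr (m + 1)) ^ k"
          unfolding v_def by (metis power_mult_distrib minus_mult_left)
        ultimately show ?thesis by (simp add: mult.commute)
      qed
      finally have "F r / r powr a / c = v r ^ k" .
      moreover have "v r > 0" unfolding v_def using neg r0 by (simp add: mult_neg_pos)
      ultimately have "F r / r powr a / c = v r powr real k" by (simp add: powr_realpow)
      then show ?case using k1 \<open>v r > 0\<close> by (simp add: powr_powr)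
    qed
    ultimately show ?thesis by (rule Lim_transform_eventually)
  qed
  have step3: "((\<lambda>r. inverse (u r) / r powr m) \<longlongrightarrow> D / (m * B ^ 2)) at_top"
  proof (rule lhospital_at_top_at_top[where g' = "\<lambda>r. m * r powr (m - 1)"
        and f' = "\<lambda>r. - (u' r * inverse (u r ^ Suc (Suc 0)))"])
    show "LIM x at_top. x powr m :> at_top" using real_powr_at_top mpos by blast
    show "\<forall>\<^sub>F x in at_top. m * x powr (m - 1) \<noteq> 0"
      using eventually_gt_at_top[of 0] by eventually_elim (use mpos in auto)
    show "\<forall>\<^sub>F x in at_top. ((\<lambda>r. inverse (u r)) has_real_derivative
            - (u' x * inverse (u x ^ Suc (Suc 0)))) (at x)"
      using eventually_gt_at_top[of 0] by eventually_elim
        (rule DERIV_inverse_fun, use Du sol(1) in auto)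
    show "\<forall>\<^sub>F x in at_top. ((\<lambda>x. x powr m) has_real_derivative m * x powr (m - 1)) (at x)"
      using eventually_gt_at_top[of 0] by eventually_elim (rule has_real_derivative_powr)
    have "((\<lambda>r. v r / (m * (u r * r powr m) ^ 2)) \<longlongrightarrow> D / (m * B ^ 2)) at_top"
      using assms(9) mpos
      by (intro tendsto_divide tendsto_mult tendsto_power step2 lim0 tendsto_const) auto
    moreover have "\<forall>\<^sub>F r in at_top. v r / (m * (u r * r powr m) ^ 2)
         = - (u' r * inverse (u r ^ Suc (Suc 0))) / (m * r powr (m - 1))"
      using eventually_gt_at_top[of 0]
    proof eventually_elim
      case (elim r)
      have ur: "u r > 0" using sol(1) elim by auto
      have e1: "r powr (m - 1) = r powr m / r" using elim by (simp add: powr_diff)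
      have e2: "r powr (m + 1) = r powr m * r" using elim by (simp add: powr_add)
      show ?case unfolding v_def e1 e2
        using aux[of "r powr m" r "u r" m "u' r"] ur elim mpos by simp
    qed
    ultimately show "((\<lambda>r. - (u' r * inverse (u r ^ Suc (Suc 0))) / (m * r powr (m - 1)))
        \<longlongrightarrow> D / (m * B ^ 2)) at_top"
      by (rule Lim_transform_eventually)
  qed
  have step3b: "((\<lambda>r. inverse (u r) / r powr m) \<longlongrightarrow> inverse B) at_top"
  proof -
    have "((\<lambda>r. inverse (u r * r powr m)) \<longlongrightarrow> inverse B) at_top"
      using assms(9) by (intro tendsto_inverse lim0) auto
    then show ?thesis by (simp add: field_simps)
  qed
  have "inverse B = D / (m * B ^ 2)"
    using tendsto_unique[OF _ step3b step3] by simp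
  then have DmB: "D = m * B" using assms(9) mpos by (simp add: field_simps power2_eq_square)
  have "(m * B) powr real k = L1 / c"
    using DmB[symmetric] unfolding D_def using L1pos cpos k1
    by (simp add: powr_powr)
  then have "m powr real k * B powr real k = B powr p / a / c"
    using mpos assms(9) by (simp add: powr_mult L1_def)
  then have "B powr p = c * m powr real k * a * B powr real k"
    using apos cpos by (simp add: field_simps)
  then have "B powr (p - real k) = c * m powr real k * a"
    using assms(9) by (simp add: powr_diff)
  moreover have "B = (B powr (p - real k)) powr (1 / (p - real k))"
    using pk assms(9) by (simp add: powr_powr)
  ultimately have "B = (c * m powr real k * a) powr (1 / (p - real k))" by simp
  also have "\<dots> = c powr (1 / (p - real k)) * m powr (real k / (p - real k))
                 * a powr (1 / (p - real k))"
    using cpos mpos apos by (simp add: powr_mult powr_powr)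
  finally show ?thesis unfolding c_def m_def a_def .
qed

end
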